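(* For every word $w\in\mathcal{M}_n^e$, \[ Hw=Q_+Q_-^{-1}w=\sum_{w'\ge w}\ \sum_{T\subseteq E^y_{w'}}(-1)^{|T|}\psi^y_Tw', \] where $w'$ ranges over words of $\mathcal{M}_n^e$ with $w'\ge w$.
   Context: $\mathcal{M}_n^e$ is the set of words in letters $x,y$ with $n_x$ $x$'s and $n_y$ $y$'s ($n=n_x+n_y$, $e=n_y-n_x$), $\mathcal{F}_n^e$ its $\mathbb{Z}$-span. $w_0\le w_1$ iff for each $i$ the $i$-th $x$ of $w_0$ is at a position $\le$ that of the $i$-th $x$ of $w_1$. $\langle w_0|w_1\rangle=1$ if $w_0\le w_1$, else $0$; $w_0\cdot w_1=\delta_{w_0,w_1}$. $H$ is the linear map with $\langle u|v\rangle=\langle v|Hu\rangle$ for all $u,v\in\mathcal{F}_n^e$; $Q_\pm$ are the linear maps with $u\cdot v=\langle u|Q_+v\rangle=\langle Q_-u|v\rangle$. $E^y_w$ is the set of $y$'s in $w$ immediately followed by an $x$; for $T\subseteq E^y_w$, $\psi^y_Tw$ replaces each such $yx$ (with $y\in T$) by $xy$. *)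

theory Defs
  imports Main
begin

datatype letter = X | Y

type_synonym word = "letter list"

definition Mset :: "nat \<Rightarrow> int \<Rightarrow> word set" where
  "Mset n e = {w. length w = n \<and>
      int (length (filter (\<lambda>c. c = Y) w)) - int (length (filter (\<lambda>c. c = X) w)) = e}"

text \<open>F_n^e: integer combinations of words of M_n^e, as finitely supported coefficient functions.\<close>
definition Fspan :: "nat \<Rightarrow> int \<Rightarrow> (word \<Rightarrow> int) set" where
  "Fspan n e = {f. \<forall>w. w \<notin> Mset n e \<longrightarrow> f w = 0}"

definition basis :: "word \<Rightarrow> (word \<Rightarrow> int)" where
  "basis w = (\<lambda>u. if u = w then 1 else 0)"

definition xpos :: "word \<Rightarrow> nat list" where
  "xpos w = filter (\<lambda>i. w ! i = X) [0..<length w]"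

definition word_le :: "word \<Rightarrow> word \<Rightarrow> bool" where
  "word_le w0 w1 \<longleftrightarrow> length (xpos w0) = length (xpos w1) \<and>
     (\<forall>i < length (xpos w0). xpos w0 ! i \<le> xpos w1 ! i)"

definition pairing :: "nat \<Rightarrow> int \<Rightarrow> (word \<Rightarrow> int) \<Rightarrow> (word \<Rightarrow> int) \<Rightarrow> int" where
  "pairing n e u v = (\<Sum>w0\<in>Mset n e. \<Sum>w1\<in>Mset n e.
      u w0 * v w1 * (if word_le w0 w1 then 1 else 0))"

definition dotp :: "nat \<Rightarrow> int \<Rightarrow> (word \<Rightarrow> int) \<Rightarrow> (word \<Rightarrow> int) \<Rightarrow> int" where
  "dotp n e u v = (\<Sum>w\<in>Mset n e. u w * v w)"

definition lin_on :: "nat \<Rightarrow> int \<Rightarrow> ((word \<Rightarrow> int) \<Rightarrow> (word \<Rightarrow> int)) \<Rightarrow> bool" where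
  "lin_on n e L \<longleftrightarrow> (\<forall>u\<in>Fspan n e. L u \<in> Fspan n e) \<and>
     (\<forall>u\<in>Fspan n e. \<forall>v\<in>Fspan n e. L (\<lambda>w. u w + v w) = (\<lambda>w. L u w + L v w)) \<and>
     (\<forall>c. \<forall>u\<in>Fspan n e. L (\<lambda>w. c * u w) = (\<lambda>w. c * L u w))"

definition Ey :: "word \<Rightarrow> nat set" where
  "Ey w = {i. Suc i < length w \<and> w ! i = Y \<and> w ! Suc i = X}"

text \<open>psi^y_T w: replace each yx (with the y at a position in T) by xy.\<close>
definition psiy :: "nat set \<Rightarrow> word \<Rightarrow> word" where
  "psiy T w = map (\<lambda>j. if j \<in> T then X else if 1 \<le> j \<and> j - 1 \<in> T then Y else w ! j)
                  [0..<length w]"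

definition RHS :: "nat \<Rightarrow> int \<Rightarrow> word \<Rightarrow> (word \<Rightarrow> int)" where
  "RHS n e w = (\<lambda>u. \<Sum>w'\<in>{w'\<in>Mset n e. word_le w w'}.
       \<Sum>T\<in>Pow (Ey w'). (-1) ^ card T * (if psiy T w' = u then 1 else 0))"

end

theory Submission
  imports Defs
begin

definition Xs :: "word \<Rightarrow> nat set" where
  "Xs w = {j. j < length w \<and> w ! j = X}"

lemma set_xpos: "set (xpos w) = Xs w"
  by (auto simp: xpos_def Xs_def)

lemma xpos_strict: "sorted_wrt (<) (xpos w)"
  unfolding xpos_def by (rule sorted_wrt_filter) simp

lemma xpos_nth_in: "i < length (xpos w) \<Longrightarrow> xpos w ! i \<in> Xs w"
  using set_xpos nth_mem by metis

lemma xpos_len: "length (xpos w) = length (filter (\<lambda>c. c = X) w)"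
proof -
  have "length (xpos w) = card {i. i < length w \<and> w ! i = X}"
    unfolding xpos_def by (simp add: distinct_card[symmetric] set_xpos[unfolded xpos_def] Xs_def)
  then show ?thesis by (simp add: length_filter_conv_card)
qed

lemma letter_neq_X: "(c \<noteq> X) = (c = Y)" by (cases c) auto

lemma lenY: "length (filter (\<lambda>c. c = Y) w) = length w - length (filter (\<lambda>c. c = X) w)"
proof -
  have "length (filter (\<lambda>c. c = X) w) + length (filter (\<lambda>c. \<not> c = X) w) = length w"
    by (rule sum_length_filter_compl)
  then show ?thesis by (simp add: letter_neq_X)
qed

lemma Mset_xlen: "w \<in> Mset n e \<Longrightarrow> 2 * int (length (xpos w)) = int n - e"
  unfolding Mset_def xpos_len using lenY[of w]
  by (auto simp: of_nat_diff)

lemma Mset_xlen_eq: "w \<in> Mset n e \<Longrightarrow> v \<in> Mset n e \<Longrightarrow> length (xpos w) = length (xpos v)"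
  using Mset_xlen[of w n e] Mset_xlen[of v n e] by simp

lemma word_eq_xpos: "length a = length b \<Longrightarrow> xpos a = xpos b \<Longrightarrow> a = b"
proof (rule nth_equalityI)
  fix j assume l: "length a = length b" and x: "xpos a = xpos b" and j: "j < length a"
  have "(a ! j = X) = (b ! j = X)"
    using arg_cong[OF x, of set] j l by (auto simp: set_xpos Xs_def)
  then show "a ! j = b ! j" by (cases "a ! j"; cases "b ! j") auto
qed

lemma finite_Mset: "finite (Mset n e)"
proof -
  have "Mset n e \<subseteq> {xs. set xs \<subseteq> UNIV \<and> length xs = n}" by (auto simp: Mset_def)
  moreover have "finite (UNIV :: letter set)"
  proof -
    have "(UNIV :: letter set) = {X, Y}" using letter.exhaust by blast
    then show ?thesis by (metis finite.emptyI finite_insert)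
  qed
  ultimately show ?thesis using finite_lists_length_eq finite_subset by blast
qed


definition fT :: "nat set \<Rightarrow> nat \<Rightarrow> nat" where
  "fT T q = (if q \<noteq> 0 \<and> q - 1 \<in> T then q - 1 else q)"

lemma length_psiy[simp]: "length (psiy T w) = length w"
  by (simp add: psiy_def)

lemma nth_psiy: "j < length w \<Longrightarrow> psiy T w ! j = (if j \<in> T then X else if 1 \<le> j \<and> j - 1 \<in> T then Y else w ! j)"
  by (simp add: psiy_def)

lemma Xs_psiy: assumes T: "T \<subseteq> Ey w" shows "Xs (psiy T w) = fT T ` Xs w"
proof
  show "Xs (psiy T w) \<subseteq> fT T ` Xs w"
  proof
    fix j assume "j \<in> Xs (psiy T w)"
    then have j: "j < length w" and pj: "psiy T w ! j = X" by (auto simp: Xs_def)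
    show "j \<in> fT T ` Xs w"
    proof (cases "j \<in> T")
      case True
      then have "Suc j < length w" "w ! Suc j = X" using T by (auto simp: Ey_def)
      then have "Suc j \<in> Xs w" by (simp add: Xs_def)
      moreover have "fT T (Suc j) = j" using True by (simp add: fT_def)
      ultimately show ?thesis by (metis image_eqI)
    next
      case False
      then have "\<not> (1 \<le> j \<and> j - 1 \<in> T)" "w ! j = X" using pj j by (auto simp: nth_psiy split: if_splits)
      then have "j \<in> Xs w" "fT T j = j" using j by (auto simp: Xs_def fT_def)
      then show ?thesis by (metis image_eqI)
    qed
  qed
next
  show "fT T ` Xs w \<subseteq> Xs (psiy T w)"
  proof
    fix j assume "j \<in> fT T ` Xs w"
    then obtain q where q: "q \<in> Xs w" and jq: "j = fT T q" by auto
    then have ql: "q < length w" and qX: "w ! q = X" by (auto simp: Xs_def)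
    show "j \<in> Xs (psiy T w)"
    proof (cases "q \<noteq> 0 \<and> q - 1 \<in> T")
      case True
      then show ?thesis using jq ql by (auto simp: fT_def Xs_def nth_psiy)
    next
      case False
      have "q \<notin> T" using T qX by (auto simp: Ey_def)
      then show ?thesis using False jq ql qX by (auto simp: fT_def Xs_def nth_psiy)
    qed
  qed
qed

lemma fT_mono: assumes T: "T \<subseteq> Ey w" and x: "x \<in> Xs w" and y: "y \<in> Xs w" and xy: "x < y"
  shows "fT T x < fT T y"
proof (cases "y \<noteq> 0 \<and> y - 1 \<in> T")
  case True
  then have "w ! (y - 1) = Y" using T by (auto simp: Ey_def)
  then have "x \<noteq> y - 1" using x by (auto simp: Xs_def)
  then show ?thesis using True xy by (auto simp: fT_def)
next
  case False
  then show ?thesis using xy by (auto simp: fT_def)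
qed

lemma xpos_psiy: assumes T: "T \<subseteq> Ey w" shows "xpos (psiy T w) = map (fT T) (xpos w)"
proof (rule strict_sorted_equal)
  show "sorted_wrt (<) (xpos (psiy T w))" by (rule xpos_strict)
  show "sorted_wrt (<) (map (fT T) (xpos w))"
    unfolding sorted_wrt_map
    by (rule sorted_wrt_mono_rel[OF _ xpos_strict[of w]]) (auto simp: set_xpos intro: fT_mono[OF T])
  show "set (xpos (psiy T w)) = set (map (fT T) (xpos w))"
    using Xs_psiy[OF T] by (simp add: set_xpos)
qed

lemma psiy_M: assumes w: "w \<in> Mset n e" and T: "T \<subseteq> Ey w" shows "psiy T w \<in> Mset n e"
proof -
  have "length (filter (\<lambda>c. c = X) (psiy T w)) = length (filter (\<lambda>c. c = X) w)"
    using xpos_psiy[OF T] by (metis length_map xpos_len)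
  then show ?thesis using w lenY[of w] lenY[of "psiy T w"] length_filter_le[of _ w]
    by (auto simp: Mset_def of_nat_diff)
qed


lemma fT_pt: "(q \<le> fT T p) = (q \<le> p \<and> (\<forall>t\<in>T. q \<le> fT {t} p))"
  by (auto simp: fT_def)

lemma word_le_xpos:
  assumes "length (xpos a) = length (xpos b)"
  shows "word_le a b = (\<forall>i < length (xpos b). xpos a ! i \<le> xpos b ! i)"
  using assms by (simp add: word_le_def)

lemma le_psiy_iff:
  assumes w0: "w0 \<in> Mset n e" and w': "w' \<in> Mset n e" and T: "T \<subseteq> Ey w'"
  shows "word_le w0 (psiy T w') = (word_le w0 w' \<and> (\<forall>t\<in>T. word_le w0 (psiy {t} w')))"
proof -
  have L: "length (xpos w0) = length (xpos w')" using Mset_xlen_eq[OF w0 w'] .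
  have t: "\<And>t. t \<in> T \<Longrightarrow> {t} \<subseteq> Ey w'" using T by auto
  have A: "word_le w0 (psiy T w') = (\<forall>i < length (xpos w'). xpos w0 ! i \<le> fT T (xpos w' ! i))"
    using L by (simp add: word_le_def xpos_psiy[OF T])
  have B: "\<And>t. t \<in> T \<Longrightarrow> word_le w0 (psiy {t} w') = (\<forall>i < length (xpos w'). xpos w0 ! i \<le> fT {t} (xpos w' ! i))"
    using L by (simp add: word_le_def xpos_psiy[OF t])
  have C: "word_le w0 w' = (\<forall>i < length (xpos w'). xpos w0 ! i \<le> xpos w' ! i)"
    using L by (simp add: word_le_def)
  have P: "\<And>i. (xpos w0 ! i \<le> fT T (xpos w' ! i)) = (xpos w0 ! i \<le> xpos w' ! i \<and> (\<forall>t\<in>T. xpos w0 ! i \<le> fT {t} (xpos w' ! i)))"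
    by (rule fT_pt)
  have "word_le w0 (psiy T w') = (\<forall>i < length (xpos w'). xpos w0 ! i \<le> xpos w' ! i \<and> (\<forall>t\<in>T. xpos w0 ! i \<le> fT {t} (xpos w' ! i)))"
    unfolding A P ..
  also have "\<dots> = (word_le w0 w' \<and> (\<forall>t\<in>T. \<forall>i < length (xpos w'). xpos w0 ! i \<le> fT {t} (xpos w' ! i)))"
    unfolding C by blast
  also have "\<dots> = (word_le w0 w' \<and> (\<forall>t\<in>T. word_le w0 (psiy {t} w')))"
    using B by auto
  finally show ?thesis .
qed


lemma alt_sum: assumes "finite S" shows "(\<Sum>T\<in>Pow S. (-1::int) ^ card T) = (if S = {} then 1 else 0)"
proof (cases "S = {}")
  case True then show ?thesis by simp
next
  case False
  then obtain a0 where "a0 \<in> S" by blast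
  then obtain a R where S: "S = insert a R" and a: "a \<notin> R" by (rule Set.set_insert)
  have R: "finite R" using assms S by simp
  have P: "Pow S = Pow R \<union> insert a ` Pow R" using S by (simp add: Pow_insert)
  have D: "Pow R \<inter> insert a ` Pow R = {}" using a by auto
  have I: "inj_on (insert a) (Pow R)"
  proof (rule inj_onI)
    fix U V assume U: "U \<in> Pow R" and V: "V \<in> Pow R" and eq: "insert a U = insert a V"
    have "a \<notin> U" "a \<notin> V" using U V a by auto
    then show "U = V" using eq by (metis Diff_insert_absorb)
  qed
  have c: "\<And>T. T \<in> Pow R \<Longrightarrow> card (insert a T) = Suc (card T)"
  proof -
    fix T assume T: "T \<in> Pow R"
    then have "finite T" "a \<notin> T" using a rev_finite_subset[OF R] by auto
    then show "card (insert a T) = Suc (card T)" by simp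
  qed
  have "(\<Sum>T\<in>Pow S. (-1::int) ^ card T) = (\<Sum>T\<in>Pow R. (-1::int) ^ card T) + (\<Sum>T\<in>insert a ` Pow R. (-1::int) ^ card T)"
    unfolding P by (rule sum.union_disjoint) (use R D in auto)
  also have "(\<Sum>T\<in>insert a ` Pow R. (-1::int) ^ card T) = (\<Sum>T\<in>Pow R. (-1::int) ^ card (insert a T))"
    by (rule sum.reindex[OF I, unfolded comp_def])
  also have "\<dots> = (\<Sum>T\<in>Pow R. - ((-1::int) ^ card T))"
    by (rule sum.cong) (auto simp: c)
  finally show ?thesis using False by (simp add: sum_negf)
qed

lemma not_le_self: assumes t: "t \<in> Ey w" shows "\<not> word_le w (psiy {t} w)"
proof
  assume le: "word_le w (psiy {t} w)"
  have tt: "{t} \<subseteq> Ey w" using t by simp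
  have "Suc t \<in> Xs w" using t by (auto simp: Ey_def Xs_def)
  then obtain i where i: "i < length (xpos w)" "xpos w ! i = Suc t"
    by (metis in_set_conv_nth set_xpos)
  have "xpos w ! i \<le> fT {t} (xpos w ! i)" using le i by (auto simp: word_le_def xpos_psiy[OF tt])
  then show False using i by (simp add: fT_def)
qed


lemma exists_t:
  assumes w0: "w0 \<in> Mset n e" and w': "w' \<in> Mset n e" and le: "word_le w0 w'" and ne: "w0 \<noteq> w'"
  shows "\<exists>t\<in>Ey w'. word_le w0 (psiy {t} w')"
proof -
  let ?p = "xpos w'" and ?q = "xpos w0"
  have L: "length ?q = length ?p" using Mset_xlen_eq[OF w0 w'] .
  have ll: "length w0 = length w'" using w0 w' by (simp add: Mset_def)
  have pt: "\<forall>i<length ?p. ?q ! i \<le> ?p ! i" using le L by (simp add: word_le_def)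
  have "?q \<noteq> ?p" using word_eq_xpos[OF ll] ne by blast
  then obtain i0 where "i0 < length ?p" "?q ! i0 \<noteq> ?p ! i0" using L by (auto simp: list_eq_iff_nth_eq)
  then have ex: "\<exists>i. i < length ?p \<and> ?q ! i < ?p ! i" using pt by (meson le_neq_implies_less)
  define i where "i = (LEAST i. i < length ?p \<and> ?q ! i < ?p ! i)"
  have i: "i < length ?p" "?q ! i < ?p ! i" using LeastI_ex[OF ex] unfolding i_def by auto
  have imin: "\<And>j. j < i \<Longrightarrow> ?q ! j = ?p ! j"
  proof -
    fix j assume j: "j < i"
    then have "\<not> (j < length ?p \<and> ?q ! j < ?p ! j)" unfolding i_def using not_less_Least by blast
    moreover have jl: "j < length ?p" using j i(1) by simp
    moreover have "?q ! j \<le> ?p ! j" using pt jl by blast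
    ultimately show "?q ! j = ?p ! j" by simp
  qed
  define t where "t = ?p ! i - 1"
  have pi0: "?p ! i \<noteq> 0" using i by simp
  have piX: "?p ! i \<in> Xs w'" using xpos_nth_in[OF i(1)] .
  have tY: "w' ! t = Y"
  proof (rule ccontr)
    assume "w' ! t \<noteq> Y"
    then have "w' ! t = X" by (cases "w' ! t") auto
    moreover have "t < length w'" using piX by (auto simp: Xs_def t_def)
    ultimately have "t \<in> set ?p" by (simp add: set_xpos Xs_def)
    then obtain j where j: "j < length ?p" "?p ! j = t" by (metis in_set_conv_nth)
    have "j < i"
    proof (rule ccontr)
      assume "\<not> j < i"
      then have "i \<le> j" by simp
      have "?p ! i \<le> ?p ! j"
      proof (cases "i = j")
        case False
        with \<open>i \<le> j\<close> have "i < j" by simp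
        from sorted_wrt_nth_less[OF xpos_strict[of w'] this j(1)] show ?thesis by simp
      qed simp
      then show False using j pi0 by (simp add: t_def)
    qed
    then have "?q ! j < ?q ! i" using sorted_wrt_nth_less[OF xpos_strict[of w0]] L i(1) by auto
    moreover have "?q ! j = t" using imin[OF \<open>j < i\<close>] j by simp
    ultimately show False using i(2) by (simp add: t_def)
  qed
  have tE: "t \<in> Ey w'" using piX pi0 tY by (auto simp: Ey_def Xs_def t_def)
  have tt: "{t} \<subseteq> Ey w'" using tE by simp
  have "word_le w0 (psiy {t} w')"
  proof -
    have "\<forall>k<length ?p. ?q ! k \<le> fT {t} (?p ! k)"
    proof (intro allI impI)
      fix k assume k: "k < length ?p"
      show "?q ! k \<le> fT {t} (?p ! k)"
      proof (cases "?p ! k \<noteq> 0 \<and> ?p ! k - 1 = t")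
        case True
        then have "?p ! k = ?p ! i" using pi0 by (simp add: t_def) linarith
        moreover have "distinct ?p" using xpos_strict[of w'] strict_sorted_iff by blast
        ultimately have "k = i" using k i(1) nth_eq_iff_index_eq by blast
        then show ?thesis using True i by (simp add: fT_def t_def)
      next
        case False
        then show ?thesis using pt k by (auto simp: fT_def)
      qed
    qed
    then show ?thesis using L by (simp add: word_le_def xpos_psiy[OF tt])
  qed
  then show ?thesis using tE by blast
qed


lemma finite_Ey: "finite (Ey w)"
  by (rule finite_subset[of _ "{..<length w}"]) (auto simp: Ey_def)

lemma key:
  assumes w0: "w0 \<in> Mset n e" and w': "w' \<in> Mset n e"
  shows "(\<Sum>T\<in>Pow (Ey w'). (-1::int) ^ card T * (if word_le w0 (psiy T w') then 1 else 0))
       = (if w0 = w' then 1 else 0)"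
proof -
  define S where "S = {t \<in> Ey w'. word_le w0 (psiy {t} w')}"
  have SE: "S \<subseteq> Ey w'" by (auto simp: S_def)
  have fS: "finite S" using finite_subset[OF SE finite_Ey] .
  have eq: "\<And>T. T \<in> Pow (Ey w') \<Longrightarrow> word_le w0 (psiy T w') = (word_le w0 w' \<and> T \<subseteq> S)"
    using le_psiy_iff[OF w0 w'] by (auto simp: S_def)
  have "(\<Sum>T\<in>Pow (Ey w'). (-1::int) ^ card T * (if word_le w0 (psiy T w') then 1 else 0))
      = (\<Sum>T\<in>Pow (Ey w'). (if word_le w0 w' \<and> T \<subseteq> S then (-1::int) ^ card T else 0))"
    by (rule sum.cong) (auto simp: eq)
  also have "\<dots> = (if word_le w0 w' then (\<Sum>T\<in>Pow S. (-1::int) ^ card T) else 0)"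
  proof (cases "word_le w0 w'")
    case True
    have "(\<Sum>T\<in>Pow (Ey w'). (if T \<subseteq> S then (-1::int) ^ card T else 0)) = (\<Sum>T\<in>{T \<in> Pow (Ey w'). T \<subseteq> S}. (-1::int) ^ card T)"
      by (rule sum.inter_filter[symmetric]) (simp add: finite_Ey)
    also have "{T \<in> Pow (Ey w'). T \<subseteq> S} = Pow S" using SE by auto
    finally show ?thesis using True by simp
  qed simp
  also have "\<dots> = (if word_le w0 w' \<and> S = {} then 1 else 0)" by (simp add: alt_sum[OF fS])
  also have "(word_le w0 w' \<and> S = {}) = (w0 = w')"
  proof
    assume "word_le w0 w' \<and> S = {}"
    then show "w0 = w'" using exists_t[OF w0 w'] by (auto simp: S_def)
  next
    assume e: "w0 = w'"
    have "word_le w' w'" by (simp add: word_le_def)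
    moreover have "S = {}" using not_le_self e by (auto simp: S_def)
    ultimately show "word_le w0 w' \<and> S = {}" using e by simp
  qed
  finally show ?thesis .
qed


lemma basis_in: "w \<in> Mset n e \<Longrightarrow> basis w \<in> Fspan n e"
  by (auto simp: basis_def Fspan_def)

lemma pairing_basis_left: assumes "w0 \<in> Mset n e"
  shows "pairing n e (basis w0) z = (\<Sum>w1\<in>Mset n e. z w1 * (if word_le w0 w1 then 1 else 0))"
proof -
  have "pairing n e (basis w0) z = (\<Sum>a\<in>Mset n e. if a = w0 then (\<Sum>w1\<in>Mset n e. z w1 * (if word_le w0 w1 then 1 else 0)) else 0)"
    unfolding pairing_def by (rule sum.cong) (auto simp: basis_def)
  also have "\<dots> = (\<Sum>w1\<in>Mset n e. z w1 * (if word_le w0 w1 then 1 else 0))"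
    using assms finite_Mset by (simp add: sum.delta)
  finally show ?thesis .
qed

lemma pairing_basis_right: assumes "w1 \<in> Mset n e"
  shows "pairing n e u (basis w1) = (\<Sum>w0\<in>Mset n e. u w0 * (if word_le w0 w1 then 1 else 0))"
proof -
  have "pairing n e u (basis w1) = (\<Sum>w0\<in>Mset n e. u w0 * (if word_le w0 w1 then 1 else 0))"
    unfolding pairing_def
  proof (rule sum.cong)
    fix w0 assume "w0 \<in> Mset n e"
    have "(\<Sum>b\<in>Mset n e. u w0 * basis w1 b * (if word_le w0 b then 1 else 0))
       = (\<Sum>b\<in>Mset n e. if b = w1 then u w0 * (if word_le w0 w1 then 1 else 0) else 0)"
      by (rule sum.cong) (auto simp: basis_def)
    also have "\<dots> = u w0 * (if word_le w0 w1 then 1 else 0)"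
      using assms finite_Mset by (simp add: sum.delta')
    finally show "(\<Sum>b\<in>Mset n e. u w0 * basis w1 b * (if word_le w0 b then 1 else 0)) = u w0 * (if word_le w0 w1 then 1 else 0)" .
  qed simp
  then show ?thesis .
qed

lemma pairing_diff_right: "pairing n e u (\<lambda>x. a x - b x) = pairing n e u a - pairing n e u b"
  unfolding pairing_def by (simp add: algebra_simps sum_subtractf)

lemma pairing_diff_left: "pairing n e (\<lambda>x. a x - b x) v = pairing n e a v - pairing n e b v"
  unfolding pairing_def by (simp add: algebra_simps sum_subtractf)

lemma sum_xpos:
  assumes a: "a \<in> Mset n e" and b: "b \<in> Mset n e" and le: "word_le a b"
  shows "sum_list (xpos a) \<le> sum_list (xpos b)"
    and "sum_list (xpos a) = sum_list (xpos b) \<Longrightarrow> a = b"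
proof -
  have L: "length (xpos a) = length (xpos b)" using Mset_xlen_eq[OF a b] .
  have pt: "\<forall>i<length (xpos b). xpos a ! i \<le> xpos b ! i" using le L by (simp add: word_le_def)
  have sa: "sum_list (xpos a) = (\<Sum>i<length (xpos b). xpos a ! i)" using L by (simp add: sum_list_sum_nth atLeast0LessThan)
  have sb: "sum_list (xpos b) = (\<Sum>i<length (xpos b). xpos b ! i)" by (simp add: sum_list_sum_nth atLeast0LessThan)
  show "sum_list (xpos a) \<le> sum_list (xpos b)" unfolding sa sb using pt by (auto intro: sum_mono)
  assume eq: "sum_list (xpos a) = sum_list (xpos b)"
  have "xpos a = xpos b"
  proof (rule ccontr)
    assume "xpos a \<noteq> xpos b"
    then obtain i where i: "i < length (xpos b)" "xpos a ! i \<noteq> xpos b ! i" using L by (auto simp: list_eq_iff_nth_eq)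
    then have "xpos a ! i < xpos b ! i" using pt by (simp add: order_less_le)
    then have "(\<Sum>i<length (xpos b). xpos a ! i) < (\<Sum>i<length (xpos b). xpos b ! i)"
      using pt i(1) by (intro sum_strict_mono_ex1) auto
    then show False using eq sa sb by simp
  qed
  moreover have "length a = length b" using a b by (simp add: Mset_def)
  ultimately show "a = b" using word_eq_xpos by blast
qed

lemma ND2: assumes z: "z \<in> Fspan n e" and h: "\<forall>u\<in>Fspan n e. pairing n e u z = 0"
  shows "z = (\<lambda>x. 0)"
proof (rule ccontr)
  assume "z \<noteq> (\<lambda>x. 0)"
  then obtain x where x: "z x \<noteq> 0" by auto
  define S where "S = {x \<in> Mset n e. z x \<noteq> 0}"
  have xS: "x \<in> S" using x z by (auto simp: S_def Fspan_def)
  have fS: "finite S" using finite_Mset by (simp add: S_def)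
  define g where "g = (\<lambda>w. sum_list (xpos w))"
  have "Max (g ` S) \<in> g ` S" using fS xS by (intro Max_in) auto
  then obtain w0 where w0: "w0 \<in> S" "g w0 = Max (g ` S)" by (metis imageE)
  have gmax: "\<And>y. y \<in> S \<Longrightarrow> g y \<le> g w0" using w0 fS by simp
  have w0M: "w0 \<in> Mset n e" using w0 by (simp add: S_def)
  have "pairing n e (basis w0) z = (\<Sum>w1\<in>Mset n e. z w1 * (if word_le w0 w1 then 1 else 0))"
    by (rule pairing_basis_left[OF w0M])
  also have "\<dots> = (\<Sum>w1\<in>Mset n e. if w1 = w0 then z w1 else 0)"
  proof (rule sum.cong)
    fix w1 assume w1: "w1 \<in> Mset n e"
    show "z w1 * (if word_le w0 w1 then 1 else 0) = (if w1 = w0 then z w1 else 0)"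
    proof (cases "w1 = w0")
      case True then show ?thesis by (simp add: word_le_def)
    next
      case False
      show ?thesis
      proof (cases "z w1 \<noteq> 0 \<and> word_le w0 w1")
        case True
        then have "w1 \<in> S" using w1 by (simp add: S_def)
        then have "g w1 \<le> g w0" by (rule gmax)
        moreover have "g w0 \<le> g w1" using sum_xpos(1)[OF w0M w1] True by (simp add: g_def)
        ultimately have "w0 = w1" using sum_xpos(2)[OF w0M w1] True by (simp add: g_def)
        then show ?thesis using False by simp
      qed (use False in auto)
    qed
  qed simp
  also have "\<dots> = z w0" using w0M finite_Mset by (simp add: sum.delta')
  finally have "pairing n e (basis w0) z = z w0" .
  moreover have "pairing n e (basis w0) z = 0" using h basis_in[OF w0M] by blast
  ultimately show False using w0 by (simp add: S_def)
qed

lemma ND1: assumes z: "z \<in> Fspan n e" and h: "\<forall>v\<in>Fspan n e. pairing n e z v = 0"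
  shows "z = (\<lambda>x. 0)"
proof (rule ccontr)
  assume "z \<noteq> (\<lambda>x. 0)"
  then obtain x where x: "z x \<noteq> 0" by auto
  define S where "S = {x \<in> Mset n e. z x \<noteq> 0}"
  have xS: "x \<in> S" using x z by (auto simp: S_def Fspan_def)
  have fS: "finite S" using finite_Mset by (simp add: S_def)
  define g where "g = (\<lambda>w. sum_list (xpos w))"
  have "Min (g ` S) \<in> g ` S" using fS xS by (intro Min_in) auto
  then obtain w0 where w0: "w0 \<in> S" "g w0 = Min (g ` S)" by (metis imageE)
  have gmin: "\<And>y. y \<in> S \<Longrightarrow> g w0 \<le> g y" using w0 fS by simp
  have w0M: "w0 \<in> Mset n e" using w0 by (simp add: S_def)
  have "pairing n e z (basis w0) = (\<Sum>w1\<in>Mset n e. z w1 * (if word_le w1 w0 then 1 else 0))"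
    by (rule pairing_basis_right[OF w0M])
  also have "\<dots> = (\<Sum>w1\<in>Mset n e. if w1 = w0 then z w1 else 0)"
  proof (rule sum.cong)
    fix w1 assume w1: "w1 \<in> Mset n e"
    show "z w1 * (if word_le w1 w0 then 1 else 0) = (if w1 = w0 then z w1 else 0)"
    proof (cases "w1 = w0")
      case True then show ?thesis by (simp add: word_le_def)
    next
      case False
      show ?thesis
      proof (cases "z w1 \<noteq> 0 \<and> word_le w1 w0")
        case True
        then have "w1 \<in> S" using w1 by (simp add: S_def)
        then have "g w0 \<le> g w1" by (rule gmin)
        moreover have "g w1 \<le> g w0" using sum_xpos(1)[OF w1 w0M] True by (simp add: g_def)
        ultimately have "w1 = w0" using sum_xpos(2)[OF w1 w0M] True by (simp add: g_def)
        then show ?thesis using False by simp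
      qed (use False in auto)
    qed
  qed simp
  also have "\<dots> = z w0" using w0M finite_Mset by (simp add: sum.delta')
  finally have "pairing n e z (basis w0) = z w0" .
  moreover have "pairing n e z (basis w0) = 0" using h basis_in[OF w0M] by blast
  ultimately show False using w0 by (simp add: S_def)
qed


lemma RHS_in: "RHS n e w \<in> Fspan n e"
  unfolding Fspan_def RHS_def
proof (rule CollectI, intro allI impI)
  fix u assume u: "u \<notin> Mset n e"
  show "(\<Sum>w'\<in>{w' \<in> Mset n e. word_le w w'}. \<Sum>T\<in>Pow (Ey w'). (-1::int) ^ card T * (if psiy T w' = u then 1 else 0)) = 0"
  proof (rule sum.neutral, intro ballI)
    fix w' assume w': "w' \<in> {w' \<in> Mset n e. word_le w w'}"
    show "(\<Sum>T\<in>Pow (Ey w'). (-1::int) ^ card T * (if psiy T w' = u then 1 else 0)) = 0"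
    proof (rule sum.neutral, intro ballI)
      fix T assume "T \<in> Pow (Ey w')"
      then have "psiy T w' \<in> Mset n e" using psiy_M w' by auto
      then show "(-1::int) ^ card T * (if psiy T w' = u then 1 else 0) = 0" using u by auto
    qed
  qed
qed

lemma inner:
  assumes w0: "w0 \<in> Mset n e"
  shows "(\<Sum>w1\<in>Mset n e. RHS n e w w1 * (if word_le w0 w1 then 1 else 0)) = (if word_le w w0 then 1 else 0)"
proof -
  let ?M = "Mset n e" and ?W = "{w' \<in> Mset n e. word_le w w'}"
  let ?c = "\<lambda>w1. (if word_le w0 w1 then 1 else 0) :: int"
  have "(\<Sum>w1\<in>?M. RHS n e w w1 * ?c w1)
      = (\<Sum>w1\<in>?M. \<Sum>w'\<in>?W. \<Sum>T\<in>Pow (Ey w'). (-1) ^ card T * (if psiy T w' = w1 then 1 else 0) * ?c w1)"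
    unfolding RHS_def by (simp add: sum_distrib_right)
  also have "\<dots> = (\<Sum>w'\<in>?W. \<Sum>w1\<in>?M. \<Sum>T\<in>Pow (Ey w'). (-1) ^ card T * (if psiy T w' = w1 then 1 else 0) * ?c w1)"
    by (rule sum.swap)
  also have "\<dots> = (\<Sum>w'\<in>?W. \<Sum>T\<in>Pow (Ey w'). \<Sum>w1\<in>?M. (-1) ^ card T * (if psiy T w' = w1 then 1 else 0) * ?c w1)"
    by (rule sum.cong[OF refl], rule sum.swap)
  also have "\<dots> = (\<Sum>w'\<in>?W. \<Sum>T\<in>Pow (Ey w'). (-1) ^ card T * ?c (psiy T w'))"
  proof (rule sum.cong[OF refl], rule sum.cong[OF refl])
    fix w' T assume w': "w' \<in> ?W" and T: "T \<in> Pow (Ey w')"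
    have pM: "psiy T w' \<in> ?M" using psiy_M w' T by auto
    have "(\<Sum>w1\<in>?M. (-1::int) ^ card T * (if psiy T w' = w1 then 1 else 0) * ?c w1)
        = (\<Sum>w1\<in>?M. if psiy T w' = w1 then (-1::int) ^ card T * ?c w1 else 0)"
      by (rule sum.cong) auto
    also have "\<dots> = (-1) ^ card T * ?c (psiy T w')" using pM finite_Mset by (simp add: sum.delta)
    finally show "(\<Sum>w1\<in>?M. (-1::int) ^ card T * (if psiy T w' = w1 then 1 else 0) * ?c w1) = (-1) ^ card T * ?c (psiy T w')" .
  qed
  also have "\<dots> = (\<Sum>w'\<in>?W. if w0 = w' then 1 else 0)"
    by (rule sum.cong[OF refl]) (use key[OF w0] in auto)
  also have "\<dots> = (if word_le w w0 then 1 else 0)"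
    using w0 finite_Mset by (simp add: sum.delta)
  finally show ?thesis .
qed

lemma Kform:
  "pairing n e u (RHS n e w) = (\<Sum>w0\<in>Mset n e. u w0 * (if word_le w w0 then 1 else 0))"
proof -
  have "pairing n e u (RHS n e w) = (\<Sum>w0\<in>Mset n e. u w0 * (\<Sum>w1\<in>Mset n e. RHS n e w w1 * (if word_le w0 w1 then 1 else 0)))"
    unfolding pairing_def by (simp add: sum_distrib_left mult.assoc)
  also have "\<dots> = (\<Sum>w0\<in>Mset n e. u w0 * (if word_le w w0 then 1 else 0))"
    by (rule sum.cong[OF refl]) (simp add: inner)
  finally show ?thesis .
qed


lemma dotp_basis: "x \<in> Mset n e \<Longrightarrow> dotp n e v (basis x) = v x"
proof -
  assume x: "x \<in> Mset n e"
  have "dotp n e v (basis x) = (\<Sum>y\<in>Mset n e. if y = x then v y else 0)"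
    unfolding dotp_def by (rule sum.cong) (auto simp: basis_def)
  also have "\<dots> = v x" using x finite_Mset by (simp add: sum.delta')
  finally show ?thesis .
qed

lemma eq0: fixes a b :: "word \<Rightarrow> int" assumes h: "(\<lambda>x. a x - b x) = (\<lambda>x. 0)" shows "a = b"
proof
  fix x from fun_cong[OF h, of x] show "a x = b x" by simp
qed

theorem mainTheorem6:
  fixes n :: nat and e :: int and w :: word
    and H Qp Qm :: "(word \<Rightarrow> int) \<Rightarrow> (word \<Rightarrow> int)"
  assumes w: "w \<in> Mset n e"
    and linH: "lin_on n e H" and linQp: "lin_on n e Qp" and linQm: "lin_on n e Qm"
    and H: "\<forall>u\<in>Fspan n e. \<forall>v\<in>Fspan n e. pairing n e u v = pairing n e v (H u)"
    and Qp: "\<forall>u\<in>Fspan n e. \<forall>v\<in>Fspan n e. dotp n e u v = pairing n e u (Qp v)"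
    and Qm: "\<forall>u\<in>Fspan n e. \<forall>v\<in>Fspan n e. dotp n e u v = pairing n e (Qm u) v"
  shows "H (basis w) = RHS n e w
       \<and> (\<exists>!v. v \<in> Fspan n e \<and> Qm v = basis w)
       \<and> (\<forall>v\<in>Fspan n e. Qm v = basis w \<longrightarrow> Qp v = RHS n e w)"
proof -
  define v0 where "v0 = (\<lambda>x. if x \<in> Mset n e \<and> word_le w x then 1 else (0::int))"
  have v0F: "v0 \<in> Fspan n e" by (simp add: v0_def Fspan_def)
  have bw: "basis w \<in> Fspan n e" using basis_in[OF w] .
  have Du: "\<And>u. dotp n e u v0 = (\<Sum>x\<in>Mset n e. u x * (if word_le w x then 1 else 0))"
    unfolding dotp_def v0_def by (rule sum.cong) auto
  have Dv: "\<And>u. dotp n e v0 u = (\<Sum>x\<in>Mset n e. u x * (if word_le w x then 1 else 0))"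
    unfolding dotp_def v0_def by (rule sum.cong) auto
  have RF: "RHS n e w \<in> Fspan n e" by (rule RHS_in)
  have sub: "\<And>a b. a \<in> Fspan n e \<Longrightarrow> b \<in> Fspan n e \<Longrightarrow> (\<lambda>x. a x - b x) \<in> Fspan n e"
    by (simp add: Fspan_def)
  have HF: "H (basis w) \<in> Fspan n e" using linH bw by (simp add: lin_on_def)
  have "(\<lambda>x. H (basis w) x - RHS n e w x) = (\<lambda>x. 0)"
  proof (rule ND2[OF sub[OF HF RF]], intro ballI)
    fix u assume u: "u \<in> Fspan n e"
    have "pairing n e u (H (basis w)) = pairing n e (basis w) u" using H bw u by (metis (no_types))
    also have "\<dots> = pairing n e u (RHS n e w)" by (simp add: pairing_basis_left[OF w] Kform)
    finally show "pairing n e u (\<lambda>x. H (basis w) x - RHS n e w x) = 0" by (simp add: pairing_diff_right)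
  qed
  then have P1: "H (basis w) = RHS n e w" by (rule eq0)
  have QmF: "Qm v0 \<in> Fspan n e" using linQm v0F by (simp add: lin_on_def)
  have "(\<lambda>x. Qm v0 x - basis w x) = (\<lambda>x. 0)"
  proof (rule ND1[OF sub[OF QmF bw]], intro ballI)
    fix v assume v: "v \<in> Fspan n e"
    have "pairing n e (Qm v0) v = dotp n e v0 v" using Qm v0F v by (metis (no_types))
    also have "\<dots> = pairing n e (basis w) v" by (simp add: pairing_basis_left[OF w] Dv)
    finally show "pairing n e (\<lambda>x. Qm v0 x - basis w x) v = 0" by (simp add: pairing_diff_left)
  qed
  then have Qm0: "Qm v0 = basis w" by (rule eq0)
  have uniq: "\<And>v. v \<in> Fspan n e \<Longrightarrow> Qm v = basis w \<Longrightarrow> v = v0"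
  proof -
    fix v assume v: "v \<in> Fspan n e" and qv: "Qm v = basis w"
    show "v = v0"
    proof
      fix x show "v x = v0 x"
      proof (cases "x \<in> Mset n e")
        case True
        have "v x = dotp n e v (basis x)" using dotp_basis[OF True] by simp
        also have "\<dots> = pairing n e (Qm v) (basis x)" using Qm v basis_in[OF True] by (metis (no_types))
        also have "\<dots> = pairing n e (Qm v0) (basis x)" using qv Qm0 by simp
        also have "\<dots> = dotp n e v0 (basis x)" using Qm v0F basis_in[OF True] by (metis (no_types))
        also have "\<dots> = v0 x" using dotp_basis[OF True] by simp
        finally show ?thesis .
      next
        case False
        then show ?thesis using v v0F by (simp add: Fspan_def)
      qed
    qed
  qed
  have P2: "\<exists>!v. v \<in> Fspan n e \<and> Qm v = basis w"
    using v0F Qm0 uniq by blast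
  have QpF: "Qp v0 \<in> Fspan n e" using linQp v0F by (simp add: lin_on_def)
  have "(\<lambda>x. Qp v0 x - RHS n e w x) = (\<lambda>x. 0)"
  proof (rule ND2[OF sub[OF QpF RF]], intro ballI)
    fix u assume u: "u \<in> Fspan n e"
    have "pairing n e u (Qp v0) = dotp n e u v0" using Qp v0F u by (metis (no_types))
    also have "\<dots> = pairing n e u (RHS n e w)" by (simp add: Du Kform)
    finally show "pairing n e u (\<lambda>x. Qp v0 x - RHS n e w x) = 0" by (simp add: pairing_diff_right)
  qed
  then have Qp0: "Qp v0 = RHS n e w" by (rule eq0)
  have P3: "\<forall>v\<in>Fspan n e. Qm v = basis w \<longrightarrow> Qp v = RHS n e w"
    using uniq Qp0 by blast
  show ?thesis using P1 P2 P3 by blast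
qed

end
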